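(* Let $\Gamma\subset U_+$ be a non-commutative, torsion-free complex Kleinian group and let $\Gamma_p$ be the subgroup of $\Gamma$ generated by all parabolic elements of $\Gamma$. Suppose $\Gamma_p$ is conjugate in $\mathrm{PSL}(3,\mathbb{C})$ to a group $$\Gamma_{\mathbf{w}}=\left\langle g_{1,0},\ g_{c,d},\ \begin{bmatrix}1&x&y\\0&1&1\\0&0&1\end{bmatrix}\right\rangle,\qquad g_{s,t}=\begin{bmatrix}1&s&t\\0&1&0\\0&0&1\end{bmatrix},$$ where $\mathbf{w}=(x,y,p,q,r)$ with $x,y\in\mathbb{C}$, $p,q,r\in\mathbb{Z}$, $p,q$ coprime, $q^2$ divides $r$, $c=pq^{-1}$ and $d=r^{-1}$. If $\mathrm{rank}(\Gamma_{\mathbf{w}})=3$, then $\Gamma$ contains no loxodromic elements.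
   Context: $U_+\subset\mathrm{PSL}(3,\mathbb{C})$ is the subgroup of elements admitting an upper triangular lift in $\mathrm{SL}(3,\mathbb{C})$. A complex Kleinian group is a discrete subgroup of $\mathrm{PSL}(3,\mathbb{C})$ acting properly discontinuously on some nonempty open invariant subset of $\mathbb{CP}^2$. An element of $\mathrm{PSL}(3,\mathbb{C})$ is parabolic if it has a non-diagonalizable lift in $\mathrm{SL}(3,\mathbb{C})$ all of whose eigenvalues have modulus $1$, and loxodromic if it has a lift in $\mathrm{SL}(3,\mathbb{C})$ with an eigenvalue of modulus different from $1$. Torsion-free means the only element of finite order is the identity. The rank of a finitely generated group is its minimal number of generators. *)

theory Defs
  imports "HOL-Analysis.Analysis"
begin

text \<open>A subgroup of PSL(3,C) is represented by its full preimage in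
SL(3,C), i.e. a subgroup of SL(3,C) containing the centre
{w I : w^3 = 1}. An element of PSL(3,C) is represented by any of its lifts.\<close>

type_synonym mat3 = "complex^3^3"

definition SL3 :: "mat3 set" where
  "SL3 = {A. det A = 1}"

definition centre3 :: "mat3 set" where
  "centre3 = {mat w | w. w ^ 3 = (1::complex)}"

definition is_subgroup3 :: "mat3 set \<Rightarrow> bool" where
  "is_subgroup3 H \<longleftrightarrow> H \<subseteq> SL3 \<and> mat 1 \<in> H \<and>
     (\<forall>g\<in>H. \<forall>h\<in>H. g ** h \<in> H) \<and> (\<forall>g\<in>H. matrix_inv g \<in> H)"

definition psl_subgroup :: "mat3 set \<Rightarrow> bool" where
  "psl_subgroup G \<longleftrightarrow> is_subgroup3 G \<and> centre3 \<subseteq> G"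

definition gen3 :: "mat3 set \<Rightarrow> mat3 set" where
  "gen3 S = \<Inter>{H. is_subgroup3 H \<and> S \<subseteq> H}"

definition psl_gen :: "mat3 set \<Rightarrow> mat3 set" where
  "psl_gen S = gen3 (centre3 \<union> S)"

definition psl_rank :: "mat3 set \<Rightarrow> nat" where
  "psl_rank G = (LEAST n. \<exists>gs. length gs = n \<and> set gs \<subseteq> SL3 \<and> psl_gen (set gs) = G)"

definition upper_tri :: "mat3 \<Rightarrow> bool" where
  "upper_tri A \<longleftrightarrow> (\<forall>i j. j < i \<longrightarrow> A $ i $ j = 0)"

definition in_Uplus :: "mat3 \<Rightarrow> bool" where
  "in_Uplus A \<longleftrightarrow> A \<in> SL3 \<and> (\<exists>w. w ^ 3 = (1::complex) \<and> upper_tri (mat w ** A))"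

definition diagonal_mat :: "mat3 \<Rightarrow> bool" where
  "diagonal_mat D \<longleftrightarrow> (\<forall>i j. i \<noteq> j \<longrightarrow> D $ i $ j = 0)"

definition diagonalizable :: "mat3 \<Rightarrow> bool" where
  "diagonalizable A \<longleftrightarrow> (\<exists>P D. invertible P \<and> diagonal_mat D \<and> A = P ** D ** matrix_inv P)"

definition is_eigenvalue :: "mat3 \<Rightarrow> complex \<Rightarrow> bool" where
  "is_eigenvalue A l \<longleftrightarrow> (\<exists>v. v \<noteq> 0 \<and> A *v v = l *s v)"

definition parabolic :: "mat3 \<Rightarrow> bool" where
  "parabolic A \<longleftrightarrow> (\<exists>w. w ^ 3 = (1::complex) \<and>
     \<not> diagonalizable (mat w ** A) \<and> (\<forall>l. is_eigenvalue (mat w ** A) l \<longrightarrow> cmod l = 1))"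

definition loxodromic :: "mat3 \<Rightarrow> bool" where
  "loxodromic A \<longleftrightarrow> (\<exists>w. w ^ 3 = (1::complex) \<and>
     (\<exists>l. is_eigenvalue (mat w ** A) l \<and> cmod l \<noteq> 1))"

definition torsion_free :: "mat3 set \<Rightarrow> bool" where
  "torsion_free G \<longleftrightarrow> (\<forall>g\<in>G. \<forall>n::nat. n > 0 \<longrightarrow> ((\<lambda>M. g ** M) ^^ n) (mat 1) \<in> centre3 \<longrightarrow> g \<in> centre3)"

definition non_commutative :: "mat3 set \<Rightarrow> bool" where
  "non_commutative G \<longleftrightarrow> (\<exists>g\<in>G. \<exists>h\<in>G. \<not> (\<exists>z\<in>centre3. g ** h = z ** (h ** g)))"

definition discrete_set :: "mat3 set \<Rightarrow> bool" where
  "discrete_set G \<longleftrightarrow> (\<forall>g\<in>G. \<exists>e>0. \<forall>h\<in>G. dist h g < e \<longrightarrow> h = g)"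

text \<open>Subsets of CP^2 are represented by cones of nonzero vectors in C^3.\<close>
definition proj_cone :: "(complex^3) set \<Rightarrow> bool" where
  "proj_cone U \<longleftrightarrow> 0 \<notin> U \<and> (\<forall>v\<in>U. \<forall>c. c \<noteq> 0 \<longrightarrow> c *s v \<in> U)"

definition acts_prop_disc :: "mat3 set \<Rightarrow> (complex^3) set \<Rightarrow> bool" where
  "acts_prop_disc G U \<longleftrightarrow> (\<forall>K. compact K \<and> K \<subseteq> U \<longrightarrow>
     finite {g\<in>G. \<exists>v\<in>K. \<exists>u\<in>K. \<exists>c. c \<noteq> 0 \<and> g *v v = c *s u})"

definition complex_kleinian :: "mat3 set \<Rightarrow> bool" where
  "complex_kleinian G \<longleftrightarrow> psl_subgroup G \<and> discrete_set G \<and>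
     (\<exists>U. open U \<and> U \<noteq> {} \<and> proj_cone U \<and> (\<forall>g\<in>G. (\<lambda>v. g *v v) ` U = U)
          \<and> acts_prop_disc G U)"

definition gst :: "complex \<Rightarrow> complex \<Rightarrow> mat3" where
  "gst s t = vector [vector [1, s, t], vector [0, 1, 0], vector [0, 0, 1]]"

definition hxy :: "complex \<Rightarrow> complex \<Rightarrow> mat3" where
  "hxy x y = vector [vector [1, x, y], vector [0, 1, 1], vector [0, 0, 1]]"

definition Gamma_w :: "complex \<Rightarrow> complex \<Rightarrow> int \<Rightarrow> int \<Rightarrow> int \<Rightarrow> mat3 set" where
  "Gamma_w x y p q r = psl_gen {gst 1 0, gst (of_int p / of_int q) (1 / of_int r), hxy x y}"

definition parabolic_subgroup :: "mat3 set \<Rightarrow> mat3 set" where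
  "parabolic_subgroup G = psl_gen {g\<in>G. parabolic g}"

definition psl_conjugate :: "mat3 set \<Rightarrow> mat3 set \<Rightarrow> bool" where
  "psl_conjugate A B \<longleftrightarrow> (\<exists>P\<in>SL3. A = (\<lambda>g. P ** g ** matrix_inv P) ` B)"

end

theory Submission
  imports Defs
begin

lemma lt01: "(0::3) < 1" by (simp add: less_bit1_def bit1.Rep_0 bit1.Rep_1)
lemma lt12: "(1::3) < 2" by (simp add: less_bit1_def bit1.Rep_numeral bit1.Rep_1)
lemma lt02: "(0::3) < 2" by (simp add: less_bit1_def bit1.Rep_numeral bit1.Rep_0)

lemma ex3: "(i::3) = 0 \<or> i = 1 \<or> i = 2" using exhaust_3[of i] by auto
lemma UNIV3: "(UNIV::3 set) = {0,1,2}" using ex3 by auto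

lemma nlt: "\<not> (1::3) < 0" "\<not> (2::3) < 0" "\<not> (2::3) < 1"
  using lt01 lt12 lt02 by (simp_all add: not_less less_imp_le)

lemma less3: "(j::3) < i \<longleftrightarrow> (i=1\<and>j=0) \<or> (i=2\<and>j=0) \<or> (i=2\<and>j=1)"
  using ex3[of i] ex3[of j] apply (elim disjE)
  by (simp_all add: lt01 lt12 lt02 nlt)

lemma upper_tri_iff: "upper_tri M \<longleftrightarrow> M$1$0 = 0 \<and> M$2$0 = 0 \<and> M$2$1 = 0"
  unfolding upper_tri_def less3 by auto

definition UT :: "complex \<Rightarrow> complex \<Rightarrow> complex \<Rightarrow> complex \<Rightarrow> complex \<Rightarrow> complex \<Rightarrow> mat3" where
  "UT a b c d e f = (\<chi> i j. if i = 0 \<and> j = 0 then a else if i = 1 \<and> j = 1 then b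
     else if i = 2 \<and> j = 2 then c else if i = 0 \<and> j = 1 then d
     else if i = 1 \<and> j = 2 then e else if i = 0 \<and> j = 2 then f else 0)"

lemma UT_nth: "UT a b c d e f $0$0 = a" "UT a b c d e f $1$1 = b" "UT a b c d e f $2$2 = c"
  "UT a b c d e f $0$1 = d" "UT a b c d e f $1$2 = e" "UT a b c d e f $0$2 = f"
  "UT a b c d e f $1$0 = 0" "UT a b c d e f $2$0 = 0" "UT a b c d e f $2$1 = 0"
  by (simp_all add: UT_def)

lemma mat_ext3:
  assumes "A$0$0 = B$0$0" "A$0$1 = B$0$1" "A$0$2 = B$0$2" "A$1$0 = B$1$0" "A$1$1 = B$1$1"
    "A$1$2 = B$1$2" "A$2$0 = B$2$0" "A$2$1 = B$2$1" "A$2$2 = B$2$2"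
  shows "(A::mat3) = B"
  unfolding vec_eq_iff
  apply (intro allI)
  subgoal for i j using ex3[of i] ex3[of j] assms by (elim disjE) simp_all
  done

lemma UT_eq: "upper_tri M \<Longrightarrow> M = UT (M$0$0) (M$1$1) (M$2$2) (M$0$1) (M$1$2) (M$0$2)"
  unfolding upper_tri_iff by (intro mat_ext3) (simp_all only: UT_nth)

lemma UT_inj: "UT a b c d e f = UT a' b' c' d' e' f' \<longleftrightarrow> a=a' \<and> b=b' \<and> c=c' \<and> d=d' \<and> e=e' \<and> f=f'"
proof
  assume h: "UT a b c d e f = UT a' b' c' d' e' f'"
  show "a=a' \<and> b=b' \<and> c=c' \<and> d=d' \<and> e=e' \<and> f=f'"
    using arg_cong[OF h, of "\<lambda>M. M$0$0"] arg_cong[OF h, of "\<lambda>M. M$1$1"] arg_cong[OF h, of "\<lambda>M. M$2$2"]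
      arg_cong[OF h, of "\<lambda>M. M$0$1"] arg_cong[OF h, of "\<lambda>M. M$1$2"] arg_cong[OF h, of "\<lambda>M. M$0$2"]
    by (simp only: UT_nth)
qed simp

lemma UT_upper: "upper_tri (UT a b c d e f)"
  unfolding upper_tri_iff by (simp add: UT_nth)

lemma sum3: "sum f (UNIV::3 set) = f 0 + f 1 + f 2"
proof -
  have "sum f (UNIV::3 set) = f 1 + f 2 + f 3" by (rule sum_3)
  also have "(3::3) = 0" by simp
  finally show ?thesis by (simp only: add_ac)
qed

lemma prod3: "prod f (UNIV::3 set) = f 0 * f 1 * f 2"
proof -
  have "prod f (UNIV::3 set) = f 1 * f 2 * f 3" unfolding UNIV_3 by (simp add: ac_simps)
  also have "(3::3) = 0" by simp
  finally show ?thesis by (simp only: mult_ac)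
qed

lemma mult_nth: "((A::mat3) ** B) $ i $ j = A$i$0 * B$0$j + A$i$1 * B$1$j + A$i$2 * B$2$j"
  unfolding matrix_matrix_mult_def by (simp only: vec_lambda_beta sum3)

lemma UT_mult: "UT a b c d e f ** UT a' b' c' d' e' f' =
   UT (a*a') (b*b') (c*c') (a*d' + d*b') (b*e' + e*c') (a*f' + d*e' + f*c')"
  by (intro mat_ext3) (simp_all add: mult_nth UT_nth)

lemma mat1_UT: "mat 1 = UT 1 1 1 0 0 0"
proof -
  have "upper_tri (mat 1 :: mat3)" unfolding upper_tri_def mat_def by auto
  from UT_eq[OF this] show ?thesis by (simp add: mat_def)
qed

lemma matw_mult: "(mat w ** (A::mat3)) $ i $ j = w * A $ i $ j"
  using ex3[of i] by (elim disjE) (simp_all add: mult_nth mat_def)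


lemma det_UT: "det (UT a b c d e f) = a * b * c"
  apply (subst det_upperdiagonal)
  using UT_upper unfolding upper_tri_def apply blast
  by (simp only: prod3 UT_nth)

lemma inv_unique: "(A::mat3) ** B = mat 1 \<Longrightarrow> B ** A = mat 1 \<Longrightarrow> matrix_inv A = B"
  unfolding matrix_inv_def
  apply (rule some_equality, simp)
  by (metis matrix_mul_assoc matrix_mul_lid matrix_mul_rid)

lemma inv_UT: "a \<noteq> 0 \<Longrightarrow> b \<noteq> 0 \<Longrightarrow> c \<noteq> 0 \<Longrightarrow> matrix_inv (UT a b c d e f) =
   UT (1/a) (1/b) (1/c) (-d/(a*b)) (-e/(b*c)) ((d*e - f*b)/(a*b*c))"
  apply (rule inv_unique)
  by (simp_all add: UT_mult mat1_UT UT_inj field_simps)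

lemma comm_UT: "UT 1 1 1 a b c ** UT 1 1 1 a' b' c' ** matrix_inv (UT 1 1 1 a b c) ** matrix_inv (UT 1 1 1 a' b' c')
   = UT 1 1 1 0 0 (a*b' - a'*b)"
  by (simp add: inv_UT UT_mult UT_inj algebra_simps)

lemma conj_UT: "b0 \<noteq> 0 \<Longrightarrow> b1 \<noteq> 0 \<Longrightarrow> b2 \<noteq> 0 \<Longrightarrow>
  \<exists>F. UT b0 b1 b2 p q s ** UT 1 1 1 \<alpha> \<beta> \<gamma> ** matrix_inv (UT b0 b1 b2 p q s)
     = UT 1 1 1 (b0*\<alpha>/b1) (b1*\<beta>/b2) F \<and> (\<alpha> = 0 \<and> \<beta> = 0 \<longrightarrow> F = b0*\<gamma>/b2)"
  apply (rule exI[of _ "b0*((p*q - s*b1)/(b0*b1*b2)) + (b0*\<alpha> + p)*(-q/(b1*b2)) + (b0*\<gamma> + p*\<beta> + s)*(1/b2)"])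
  by (simp add: inv_UT UT_mult UT_inj field_simps)

lemma norm_vec_le_sum: "norm (x::'a::real_normed_vector^'n) \<le> sum (\<lambda>i. norm (x$i)) UNIV"
  unfolding norm_vec_def by (rule L2_set_le_sum) simp

lemma norm_UT: "norm (UT 0 0 0 0 0 t) \<le> cmod t"
proof -
  have "norm (UT 0 0 0 0 0 t) \<le> sum (\<lambda>i. norm (UT 0 0 0 0 0 t $ i)) UNIV" by (rule norm_vec_le_sum)
  also have "\<dots> \<le> sum (\<lambda>i. sum (\<lambda>j. norm (UT 0 0 0 0 0 t $ i $ j)) UNIV) UNIV"
    by (rule sum_mono, rule norm_vec_le_sum)
  also have "\<dots> = cmod t" by (simp add: sum3 UT_nth)
  finally show ?thesis .
qed

lemma UT_minus: "UT a b c d e f - UT a' b' c' d' e' f' = UT (a-a') (b-b') (c-c') (d-d') (e-e') (f-f')"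
  unfolding UT_def by (simp add: vec_eq_iff)

lemma sg_mult: "is_subgroup3 G \<Longrightarrow> g \<in> G \<Longrightarrow> h \<in> G \<Longrightarrow> g ** h \<in> G"
  unfolding is_subgroup3_def by blast
lemma sg_inv: "is_subgroup3 G \<Longrightarrow> g \<in> G \<Longrightarrow> matrix_inv g \<in> G"
  unfolding is_subgroup3_def by blast
lemma sg_one: "is_subgroup3 G \<Longrightarrow> mat 1 \<in> G"
  unfolding is_subgroup3_def by blast

lemma small_contra:
  assumes "discrete_set G" "mat 1 \<in> G"
    and "\<forall>e>0. \<exists>\<tau>. \<tau> \<noteq> 0 \<and> cmod \<tau> < e \<and> UT 1 1 1 0 0 \<tau> \<in> G"
  shows False
proof -
  obtain e where e: "e > 0" "\<forall>h\<in>G. dist h (mat 1) < e \<longrightarrow> h = mat 1"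
    using assms(1,2) unfolding discrete_set_def by blast
  then obtain \<tau> where t: "\<tau> \<noteq> 0" "cmod \<tau> < e" "UT 1 1 1 0 0 \<tau> \<in> G" using assms(3) by blast
  have "dist (UT 1 1 1 0 0 \<tau>) (mat 1) = norm (UT 0 0 0 0 0 \<tau>)"
    by (simp add: dist_norm mat1_UT UT_minus)
  also have "\<dots> < e" using norm_UT[of \<tau>] t(2) by linarith
  finally have "UT 1 1 1 0 0 \<tau> = mat 1" using e t(3) by blast
  then show False using t(1) by (simp add: mat1_UT UT_inj)
qed

lemma iter_conj:
  assumes sg: "is_subgroup3 G" and B: "UT b0 b1 b2 p q s \<in> G" and nz: "b0 \<noteq> 0" "b1 \<noteq> 0" "b2 \<noteq> 0"
    and u: "UT 1 1 1 \<alpha> \<beta> \<gamma> \<in> G"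
  shows "\<exists>F. UT 1 1 1 ((b0/b1)^k*\<alpha>) ((b1/b2)^k*\<beta>) F \<in> G \<and> (\<alpha> = 0 \<and> \<beta> = 0 \<longrightarrow> F = (b0/b2)^k*\<gamma>)"
proof (induction k)
  case 0
  then show ?case using u by auto
next
  case (Suc k)
  then obtain F where F: "UT 1 1 1 ((b0/b1)^k*\<alpha>) ((b1/b2)^k*\<beta>) F \<in> G"
     "\<alpha> = 0 \<and> \<beta> = 0 \<longrightarrow> F = (b0/b2)^k*\<gamma>" by blast
  obtain F' where F': "UT b0 b1 b2 p q s ** UT 1 1 1 ((b0/b1)^k*\<alpha>) ((b1/b2)^k*\<beta>) F ** matrix_inv (UT b0 b1 b2 p q s)
     = UT 1 1 1 (b0*((b0/b1)^k*\<alpha>)/b1) (b1*((b1/b2)^k*\<beta>)/b2) F'"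
     "(b0/b1)^k*\<alpha> = 0 \<and> (b1/b2)^k*\<beta> = 0 \<longrightarrow> F' = b0*F/b2"
    using conj_UT[OF nz] by blast
  have "UT b0 b1 b2 p q s ** UT 1 1 1 ((b0/b1)^k*\<alpha>) ((b1/b2)^k*\<beta>) F ** matrix_inv (UT b0 b1 b2 p q s) \<in> G"
    using sg_mult[OF sg] sg_inv[OF sg] B F(1) by blast
  moreover have "b0*((b0/b1)^k*\<alpha>)/b1 = (b0/b1)^Suc k*\<alpha>" "b1*((b1/b2)^k*\<beta>)/b2 = (b1/b2)^Suc k*\<beta>"
    by (simp_all add: field_simps)
  moreover have "\<alpha> = 0 \<and> \<beta> = 0 \<longrightarrow> F' = (b0/b2)^Suc k*\<gamma>"
    using F(2) F'(2) by (simp add: field_simps)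
  ultimately show ?case using F'(1) by metis
qed

lemma pow_small:
  assumes "cmod \<rho> < 1" "\<rho> \<noteq> 0" "C \<noteq> 0" "e > 0"
  shows "\<exists>k. \<rho>^k*C \<noteq> 0 \<and> cmod (\<rho>^k*C) < e"
proof -
  obtain k where k: "cmod \<rho> ^ k < e / cmod C"
    using real_arch_pow_inv[of "e / cmod C" "cmod \<rho>"] assms by auto
  have "cmod (\<rho>^k*C) = cmod \<rho> ^ k * cmod C" by (simp add: norm_mult norm_power)
  also have "\<dots> < e" using k assms(3) by (simp add: field_simps)
  finally show ?thesis using assms by auto
qed

lemma L_central:
  assumes sg: "is_subgroup3 G" and disc: "discrete_set G"
    and z: "UT 1 1 1 0 0 \<tau> \<in> G" "\<tau> \<noteq> 0"
    and B: "UT b0 b1 b2 p q s \<in> G" and nz: "b0 \<noteq> 0" "b1 \<noteq> 0" "b2 \<noteq> 0"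
    and r: "cmod (b0/b2) < 1"
  shows False
proof (rule small_contra[OF disc sg_one[OF sg]], intro allI impI)
  fix e :: real assume "e > 0"
  then obtain k where k: "(b0/b2)^k*\<tau> \<noteq> 0" "cmod ((b0/b2)^k*\<tau>) < e"
    using pow_small[OF r _ z(2)] nz by auto
  have "UT 1 1 1 0 0 ((b0/b2)^k*\<tau>) \<in> G"
    using iter_conj[OF sg B nz z(1), of k] by auto
  then show "\<exists>\<tau>. \<tau> \<noteq> 0 \<and> cmod \<tau> < e \<and> UT 1 1 1 0 0 \<tau> \<in> G" using k by blast
qed

lemma L_12:
  assumes sg: "is_subgroup3 G" and disc: "discrete_set G"
    and v: "UT 1 1 1 \<alpha> 0 \<gamma> \<in> G" "\<alpha> \<noteq> 0"
    and h: "UT 1 1 1 \<alpha>' \<beta>' \<gamma>' \<in> G" "\<beta>' \<noteq> 0"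
    and B: "UT b0 b1 b2 p q s \<in> G" and nz: "b0 \<noteq> 0" "b1 \<noteq> 0" "b2 \<noteq> 0"
    and r: "cmod (b1/b2) < 1"
  shows False
proof (rule small_contra[OF disc sg_one[OF sg]], intro allI impI)
  fix e :: real assume "e > 0"
  then obtain k where k: "(b1/b2)^k*(-\<alpha>*\<beta>') \<noteq> 0" "cmod ((b1/b2)^k*(-\<alpha>*\<beta>')) < e"
    using pow_small[OF r, of "-\<alpha>*\<beta>'"] nz v(2) h(2) by auto
  obtain F where F: "UT 1 1 1 ((b0/b1)^k*\<alpha>') ((b1/b2)^k*\<beta>') F \<in> G"
    using iter_conj[OF sg B nz h(1), of k] by auto
  have "UT 1 1 1 ((b0/b1)^k*\<alpha>') ((b1/b2)^k*\<beta>') F ** UT 1 1 1 \<alpha> 0 \<gamma> **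
     matrix_inv (UT 1 1 1 ((b0/b1)^k*\<alpha>') ((b1/b2)^k*\<beta>') F) ** matrix_inv (UT 1 1 1 \<alpha> 0 \<gamma>) \<in> G"
    using sg_mult[OF sg] sg_inv[OF sg] F v(1) by blast
  also have "UT 1 1 1 ((b0/b1)^k*\<alpha>') ((b1/b2)^k*\<beta>') F ** UT 1 1 1 \<alpha> 0 \<gamma> **
     matrix_inv (UT 1 1 1 ((b0/b1)^k*\<alpha>') ((b1/b2)^k*\<beta>') F) ** matrix_inv (UT 1 1 1 \<alpha> 0 \<gamma>)
     = UT 1 1 1 0 0 ((b1/b2)^k*(-\<alpha>*\<beta>'))"
    by (subst comm_UT) (simp add: UT_inj algebra_simps)
  finally show "\<exists>\<tau>. \<tau> \<noteq> 0 \<and> cmod \<tau> < e \<and> UT 1 1 1 0 0 \<tau> \<in> G" using k by blast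
qed

lemma L_01:
  assumes sg: "is_subgroup3 G" and disc: "discrete_set G"
    and v: "UT 1 1 1 0 \<beta> \<gamma> \<in> G" "\<beta> \<noteq> 0"
    and h: "UT 1 1 1 \<alpha>' \<beta>' \<gamma>' \<in> G" "\<alpha>' \<noteq> 0"
    and B: "UT b0 b1 b2 p q s \<in> G" and nz: "b0 \<noteq> 0" "b1 \<noteq> 0" "b2 \<noteq> 0"
    and r: "cmod (b0/b1) < 1"
  shows False
proof (rule small_contra[OF disc sg_one[OF sg]], intro allI impI)
  fix e :: real assume "e > 0"
  then obtain k where k: "(b0/b1)^k*(\<alpha>'*\<beta>) \<noteq> 0" "cmod ((b0/b1)^k*(\<alpha>'*\<beta>)) < e"
    using pow_small[OF r, of "\<alpha>'*\<beta>"] nz v(2) h(2) by auto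
  obtain F where F: "UT 1 1 1 ((b0/b1)^k*\<alpha>') ((b1/b2)^k*\<beta>') F \<in> G"
    using iter_conj[OF sg B nz h(1), of k] by auto
  have "UT 1 1 1 ((b0/b1)^k*\<alpha>') ((b1/b2)^k*\<beta>') F ** UT 1 1 1 0 \<beta> \<gamma> **
     matrix_inv (UT 1 1 1 ((b0/b1)^k*\<alpha>') ((b1/b2)^k*\<beta>') F) ** matrix_inv (UT 1 1 1 0 \<beta> \<gamma>) \<in> G"
    using sg_mult[OF sg] sg_inv[OF sg] F v(1) by blast
  also have "UT 1 1 1 ((b0/b1)^k*\<alpha>') ((b1/b2)^k*\<beta>') F ** UT 1 1 1 0 \<beta> \<gamma> **
     matrix_inv (UT 1 1 1 ((b0/b1)^k*\<alpha>') ((b1/b2)^k*\<beta>') F) ** matrix_inv (UT 1 1 1 0 \<beta> \<gamma>)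
     = UT 1 1 1 0 0 ((b0/b1)^k*(\<alpha>'*\<beta>))"
    by (subst comm_UT) (simp add: UT_inj algebra_simps)
  finally show "\<exists>\<tau>. \<tau> \<noteq> 0 \<and> cmod \<tau> < e \<and> UT 1 1 1 0 0 \<tau> \<in> G" using k by blast
qed


lemma choose_ratio: "cmod x \<noteq> cmod y \<Longrightarrow> x \<noteq> 0 \<Longrightarrow> y \<noteq> 0 \<Longrightarrow>
   cmod (x/y) < 1 \<or> cmod ((1/x)/(1/y)) < 1"
  by (auto simp: norm_divide field_simps)

lemma cube_one: "0 \<le> (m::real) \<Longrightarrow> m^3 = 1 \<Longrightarrow> m = 1"
  using power_eq_iff_eq_base[of 3 m 1] by simp

lemma main_alg:
  assumes sg: "is_subgroup3 G" and disc: "discrete_set G"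
    and v: "UT 1 1 1 \<alpha> \<beta> \<gamma> \<in> G" and h: "UT 1 1 1 \<alpha>' \<beta>' \<gamma>' \<in> G"
    and ab: "\<alpha>*\<beta> = 0" and nc: "\<alpha>*\<beta>' \<noteq> \<alpha>'*\<beta>"
    and A: "UT a0 a1 a2 p q s \<in> G" and pr: "a0*a1*a2 = 1"
    and nall: "\<not> (cmod a0 = 1 \<and> cmod a1 = 1 \<and> cmod a2 = 1)"
  shows False
proof -
  have nz: "a0 \<noteq> 0" "a1 \<noteq> 0" "a2 \<noteq> 0" using pr by auto
  have Ai: "UT (1/a0) (1/a1) (1/a2) (-p/(a0*a1)) (-q/(a1*a2)) ((p*q - s*a1)/(a0*a1*a2)) \<in> G"
    using sg_inv[OF sg A] inv_UT[OF nz, of p q s] by simp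
  have nzi: "1/a0 \<noteq> 0" "1/a1 \<noteq> 0" "1/a2 \<noteq> 0" using nz by auto
  have z: "UT 1 1 1 0 0 (\<alpha>*\<beta>' - \<alpha>'*\<beta>) \<in> G"
    using sg_mult[OF sg] sg_inv[OF sg] v h comm_UT[of \<alpha> \<beta> \<gamma> \<alpha>' \<beta>' \<gamma>'] by metis
  have zn: "\<alpha>*\<beta>' - \<alpha>'*\<beta> \<noteq> 0" using nc by simp
  have e02: "cmod a0 = cmod a2"
  proof (rule ccontr)
    assume "cmod a0 \<noteq> cmod a2"
    then consider "cmod (a0/a2) < 1" | "cmod ((1/a0)/(1/a2)) < 1" using choose_ratio nz by blast
    then show False
    proof cases
      case 1 then show False using L_central[OF sg disc z zn A nz] by blast
    next
      case 2 then show False using L_central[OF sg disc z zn Ai nzi] by blast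
    qed
  qed
  have allm: "cmod a0 = cmod a1 \<and> cmod a1 = cmod a2"
  proof (cases "\<beta> = 0")
    case True
    then have an: "\<alpha> \<noteq> 0" "\<beta>' \<noteq> 0" using nc by auto
    have v': "UT 1 1 1 \<alpha> 0 \<gamma> \<in> G" using v True by simp
    have "cmod a1 = cmod a2"
    proof (rule ccontr)
      assume "cmod a1 \<noteq> cmod a2"
      then consider "cmod (a1/a2) < 1" | "cmod ((1/a1)/(1/a2)) < 1" using choose_ratio nz by blast
      then show False
      proof cases
        case 1 then show False using L_12[OF sg disc v' an(1) h an(2) A nz] by blast
      next
        case 2 then show False using L_12[OF sg disc v' an(1) h an(2) Ai nzi] by blast
      qed
    qed
    then show ?thesis using e02 by simp
  next
    case False
    then have an: "\<beta> \<noteq> 0" "\<alpha>' \<noteq> 0" "\<alpha> = 0" using nc ab by auto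
    have v': "UT 1 1 1 0 \<beta> \<gamma> \<in> G" using v an by simp
    have "cmod a0 = cmod a1"
    proof (rule ccontr)
      assume "cmod a0 \<noteq> cmod a1"
      then consider "cmod (a0/a1) < 1" | "cmod ((1/a0)/(1/a1)) < 1" using choose_ratio nz by blast
      then show False
      proof cases
        case 1 then show False using L_01[OF sg disc v' an(1) h an(2) A nz] by blast
      next
        case 2 then show False using L_01[OF sg disc v' an(1) h an(2) Ai nzi] by blast
      qed
    qed
    then show ?thesis using e02 by simp
  qed
  have "cmod a0 ^ 3 = 1"
  proof -
    have "cmod a0 ^ 3 = cmod a0 * cmod a1 * cmod a2" using allm by (simp add: power3_eq_cube)
    also have "\<dots> = cmod (a0*a1*a2)" by (simp add: norm_mult)
    finally show ?thesis using pr by simp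
  qed
  then have "cmod a0 = 1" using cube_one by simp
  then show False using allm nall by simp
qed

lemma eig_UT:
  assumes "UT a b c d e f *v v = l *s v" "v \<noteq> 0"
  shows "l = a \<or> l = b \<or> l = c"
proof -
  have comp: "(UT a b c d e f *v v) $ i = UT a b c d e f $i$0 * v$0 + UT a b c d e f $i$1 * v$1 + UT a b c d e f $i$2 * v$2" for i
    unfolding matrix_vector_mult_def by (simp only: vec_lambda_beta sum3)
  have e0: "a* v$0 + d* v$1 + f* v$2 = l* v$0" using arg_cong[OF assms(1), of "\<lambda>x. x$0"] comp[of 0] by (simp add: UT_nth)
  have e1: "b* v$1 + e* v$2 = l* v$1" using arg_cong[OF assms(1), of "\<lambda>x. x$1"] comp[of 1] by (simp add: UT_nth)
  have e2: "c* v$2 = l* v$2" using arg_cong[OF assms(1), of "\<lambda>x. x$2"] comp[of 2] by (simp add: UT_nth)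
  have "v$0 \<noteq> 0 \<or> v$1 \<noteq> 0 \<or> v$2 \<noteq> 0"
  proof (rule ccontr)
    assume "\<not> ?thesis"
    then have "v$i = 0" for i using ex3[of i] by auto
    then have "v = 0" by (simp add: vec_eq_iff)
    then show False using assms(2) by simp
  qed
  then show ?thesis using e0 e1 e2 by auto
qed

lemma matw_UT: "mat w ** UT a b c d e f = UT (w*a) (w*b) (w*c) (w*d) (w*e) (w*f)"
  by (intro mat_ext3) (simp_all add: matw_mult UT_nth)

lemma UT_add: "UT a b c d e f + UT a' b' c' d' e' f' = UT (a+a') (b+b') (c+c') (d+d') (e+e') (f+f')"
  unfolding UT_def by (simp add: vec_eq_iff)


lemma vec3_nth: "(vector [a,b,c] :: ('a::zero)^3) $ 1 = a" "(vector [a,b,c] :: ('a::zero)^3) $ 2 = b"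
  "(vector [a,b,c] :: ('a::zero)^3) $ 0 = c"
proof -
  show "(vector [a,b,c] :: ('a::zero)^3) $ 1 = a" "(vector [a,b,c] :: ('a::zero)^3) $ 2 = b" by simp_all
  have "(vector [a,b,c] :: ('a::zero)^3) $ 3 = c" by (rule vector_3(3))
  moreover have "(3::3) = 0" by simp
  ultimately show "(vector [a,b,c] :: ('a::zero)^3) $ 0 = c" by simp
qed

lemma g_nth: "gst 1 0 $0$0 = 1" "gst 1 0 $0$1 = 0" "gst 1 0 $0$2 = 0"
  "gst 1 0 $1$0 = 0" "gst 1 0 $1$1 = 1" "gst 1 0 $1$2 = 1"
  "gst 1 0 $2$0 = 0" "gst 1 0 $2$1 = 0" "gst 1 0 $2$2 = 1"
  unfolding gst_def by (simp_all only: vec3_nth)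

lemma h_nth: "hxy x y $0$0 = 1" "hxy x y $0$1 = 0" "hxy x y $0$2 = 0"
  "hxy x y $1$0 = y" "hxy x y $1$1 = 1" "hxy x y $1$2 = x"
  "hxy x y $2$0 = 1" "hxy x y $2$1 = 0" "hxy x y $2$2 = 1"
  unfolding hxy_def by (simp_all only: vec3_nth)

lemma mat1_nth: "(mat 1 :: mat3) $0$0 = 1" "(mat 1 :: mat3) $0$1 = 0" "(mat 1 :: mat3) $0$2 = 0"
  "(mat 1 :: mat3) $1$0 = 0" "(mat 1 :: mat3) $1$1 = 1" "(mat 1 :: mat3) $1$2 = 0"
  "(mat 1 :: mat3) $2$0 = 0" "(mat 1 :: mat3) $2$1 = 0" "(mat 1 :: mat3) $2$2 = 1"
  by (simp_all add: mat1_UT UT_nth)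

lemma add_nth: "((A::mat3) + B) $ i $ j = A$i$j + B$i$j" by simp

lemma g_sq: "gst 1 0 ** gst 1 0 + mat 1 = gst 1 0 + gst 1 0"
  by (intro mat_ext3) (simp_all only: add_nth mult_nth g_nth mat1_nth, simp_all)

lemma h_cube: "hxy x y ** hxy x y ** hxy x y + hxy x y + hxy x y + hxy x y
   = hxy x y ** hxy x y + hxy x y ** hxy x y + hxy x y ** hxy x y + mat 1"
  by (intro mat_ext3) (simp_all only: add_nth mult_nth h_nth mat1_nth, simp_all add: algebra_simps)

lemma gh_nc: "gst 1 0 ** hxy x y \<noteq> hxy x y ** gst 1 0"
proof
  assume "gst 1 0 ** hxy x y = hxy x y ** gst 1 0"
  then have "(gst 1 0 ** hxy x y) $1$0 = (hxy x y ** gst 1 0) $1$0" by simp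
  then show False by (simp only: mult_nth g_nth h_nth) simp
qed

lemma rdistrib3: "((B::mat3) + C) ** A = B ** A + C ** A"
  by (simp add: vec_eq_iff mult_nth algebra_simps)

lemma inv_props: "invertible (A::mat3) \<Longrightarrow> A ** matrix_inv A = mat 1 \<and> matrix_inv A ** A = mat 1"
  unfolding invertible_def matrix_inv_def by (rule someI_ex)

lemma sq1: "(x::complex)*x + 1 = x + x \<Longrightarrow> x = 1"
proof -
  assume a: "x*x + 1 = x + x"
  have "(x-1)^2 = (x*x + 1) - (x + x)" by (simp add: power2_eq_square algebra_simps)
  then have "(x-1)^2 = 0" using a by simp
  then show ?thesis by simp
qed

lemma cube1: "(x::complex)*x*x + x + x + x = x*x + x*x + x*x + 1 \<Longrightarrow> x = 1"
proof -
  assume a: "x*x*x + x + x + x = x*x + x*x + x*x + 1"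
  have "(x-1)^3 = (x*x*x + x + x + x) - (x*x + x*x + x*x + 1)" by (simp add: power3_eq_cube algebra_simps)
  then have "(x-1)^3 = 0" using a by simp
  then show ?thesis by simp
qed


theorem mainTheorem6:
  fixes G :: "mat3 set" and x y :: complex and p q r :: int
  assumes "complex_kleinian G"
    and "\<forall>g\<in>G. in_Uplus g"
    and "non_commutative G"
    and "torsion_free G"
    and "coprime p q" and "r \<noteq> 0" and "q ^ 2 dvd r"
    and "psl_conjugate (parabolic_subgroup G) (Gamma_w x y p q r)"
    and "psl_rank (Gamma_w x y p q r) = 3"
  shows "\<forall>g\<in>G. \<not> loxodromic g"
proof -
  have psl: "psl_subgroup G" using assms(1) unfolding complex_kleinian_def by (rule conjunct1)
  have disc: "discrete_set G" using assms(1) unfolding complex_kleinian_def by (rule conjunct1[OF conjunct2])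
  have sg: "is_subgroup3 G" using psl unfolding psl_subgroup_def by (rule conjunct1)
  have cen: "centre3 \<subseteq> G" using psl unfolding psl_subgroup_def by (rule conjunct2)
  have up: "upper_tri g" if "g \<in> G" for g
  proof -
    have "in_Uplus g" using assms(2) that by (rule bspec)
    then have "\<exists>w. w^3 = (1::complex) \<and> upper_tri (mat w ** g)" unfolding in_Uplus_def by (rule conjunct2)
    then obtain w where w: "w^3 = 1" "upper_tri (mat w ** g)" by blast
    have wn: "w \<noteq> 0" using w(1) by auto
    show ?thesis unfolding upper_tri_def
    proof (intro allI impI)
      fix i j :: 3 assume "j < i"
      then have "(mat w ** g)$i$j = 0" using w(2) unfolding upper_tri_def by blast
      then show "g$i$j = 0" using wn by (simp add: matw_mult)
    qed
  qed
  have sub: "parabolic_subgroup G \<subseteq> G"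
  proof -
    have "G \<in> {H. is_subgroup3 H \<and> centre3 \<union> {g\<in>G. parabolic g} \<subseteq> H}" using sg cen by blast
    then show ?thesis unfolding parabolic_subgroup_def psl_gen_def gen3_def by (rule Inter_lower)
  qed
  obtain P where P: "P \<in> SL3" "parabolic_subgroup G = (\<lambda>g. P ** g ** matrix_inv P) ` Gamma_w x y p q r"
    using assms(8) unfolding psl_conjugate_def by blast
  define Q where "Q = matrix_inv P"
  have inv: "invertible P" using P(1) unfolding SL3_def by (simp add: invertible_det_nz)
  have PQ: "P ** Q = mat 1" "Q ** P = mat 1" using inv_props[OF inv] Q_def by auto
  have gw: "gst 1 0 \<in> Gamma_w x y p q r" "hxy x y \<in> Gamma_w x y p q r"
    unfolding Gamma_w_def psl_gen_def gen3_def by blast+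
  define V where "V = P ** gst 1 0 ** Q"
  define H where "H = P ** hxy x y ** Q"
  have VG: "V \<in> G" using gw(1) P(2) sub unfolding V_def Q_def by blast
  have HG: "H \<in> G" using gw(2) P(2) sub unfolding H_def Q_def by blast
  have QP: "Q ** (P ** Z) = Z" for Z by (simp add: matrix_mul_assoc PQ(2))
  have cm: "(P ** X ** Q) ** (P ** Y ** Q) = P ** (X ** Y) ** Q" for X Y
    by (simp add: matrix_mul_assoc[symmetric] QP)
  have ca: "P ** (X + Y) ** Q = P ** X ** Q + P ** Y ** Q" for X Y
    by (simp add: matrix_add_ldistrib rdistrib3)
  have c1: "P ** mat 1 ** Q = mat 1" using PQ by simp
  have cinj: "X = Y" if "P ** X ** Q = P ** Y ** Q" for X Y
  proof -
    have "Q ** (P ** X ** Q) ** P = X" by (simp add: matrix_mul_assoc[symmetric] QP PQ)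
    moreover have "Q ** (P ** Y ** Q) ** P = Y" by (simp add: matrix_mul_assoc[symmetric] QP PQ)
    ultimately show ?thesis using that by metis
  qed
  have V2: "V ** V + mat 1 = V + V"
  proof -
    have "P ** (gst 1 0 ** gst 1 0 + mat 1) ** Q = P ** (gst 1 0 + gst 1 0) ** Q" using g_sq by simp
    then show ?thesis unfolding V_def by (simp only: ca c1 cm[symmetric])
  qed
  have H3: "H ** H ** H + H + H + H = H ** H + H ** H + H ** H + mat 1"
  proof -
    have "P ** (hxy x y ** hxy x y ** hxy x y + hxy x y + hxy x y + hxy x y) ** Q
      = P ** (hxy x y ** hxy x y + hxy x y ** hxy x y + hxy x y ** hxy x y + mat 1) ** Q"
      using h_cube by simp
    then show ?thesis unfolding H_def by (simp only: ca c1 cm[symmetric])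
  qed
  have VH: "V ** H \<noteq> H ** V"
  proof
    assume "V ** H = H ** V"
    then have "P ** (gst 1 0 ** hxy x y) ** Q = P ** (hxy x y ** gst 1 0) ** Q"
      unfolding V_def H_def by (simp only: cm)
    then show False using cinj gh_nc by blast
  qed
  obtain d0 d1 d2 \<alpha> \<beta> \<gamma> where Vd: "V = UT d0 d1 d2 \<alpha> \<beta> \<gamma>" using UT_eq[OF up[OF VG]] by blast
  obtain e0 e1 e2 \<alpha>' \<beta>' \<gamma>' where He: "H = UT e0 e1 e2 \<alpha>' \<beta>' \<gamma>'" using UT_eq[OF up[OF HG]] by blast
  have Veq: "d0*d0 + 1 = d0 + d0" "d1*d1 + 1 = d1 + d1" "d2*d2 + 1 = d2 + d2"
    "d0*\<gamma> + \<alpha>*\<beta> + \<gamma>*d2 + 0 = \<gamma> + \<gamma>"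
    using V2 unfolding Vd by (simp_all only: UT_mult UT_add mat1_UT UT_inj)
  have d1s: "d0 = 1" "d1 = 1" "d2 = 1" using sq1 Veq(1-3) by auto
  have ab: "\<alpha>*\<beta> = 0" using Veq(4) d1s by simp
  have Heq: "e0*e0*e0 + e0 + e0 + e0 = e0*e0 + e0*e0 + e0*e0 + 1"
    "e1*e1*e1 + e1 + e1 + e1 = e1*e1 + e1*e1 + e1*e1 + 1"
    "e2*e2*e2 + e2 + e2 + e2 = e2*e2 + e2*e2 + e2*e2 + 1"
    using H3 unfolding He by (simp_all only: UT_mult UT_add mat1_UT UT_inj)
  have e1s: "e0 = 1" "e1 = 1" "e2 = 1" using cube1 Heq by auto
  have V1: "UT 1 1 1 \<alpha> \<beta> \<gamma> \<in> G" using VG Vd d1s by simp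
  have H1: "UT 1 1 1 \<alpha>' \<beta>' \<gamma>' \<in> G" using HG He e1s by simp
  have nc: "\<alpha>*\<beta>' \<noteq> \<alpha>'*\<beta>"
  proof
    assume "\<alpha>*\<beta>' = \<alpha>'*\<beta>"
    then have "V ** H = H ** V" unfolding Vd He d1s e1s by (simp add: UT_mult UT_inj algebra_simps)
    then show False using VH by simp
  qed
  show ?thesis
  proof (intro ballI notI)
    fix g assume gG: "g \<in> G" and lox: "loxodromic g"
    obtain w l where wl: "w^3 = 1" "is_eigenvalue (mat w ** g) l" "cmod l \<noteq> 1"
      using lox unfolding loxodromic_def by blast
    obtain a0 a1 a2 p' q' s' where ga: "g = UT a0 a1 a2 p' q' s'" using UT_eq[OF up[OF gG]] by blast
    have "det g = 1" using sg gG unfolding is_subgroup3_def SL3_def by blast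
    then have pr: "a0*a1*a2 = 1" using ga det_UT by simp
    have wn: "cmod w = 1"
    proof -
      have "cmod w ^ 3 = 1" using wl(1) by (metis norm_one norm_power)
      then show ?thesis using cube_one by simp
    qed
    obtain v where v: "v \<noteq> 0" "UT (w*a0) (w*a1) (w*a2) (w*p') (w*q') (w * s') *v v = l *s v"
      using wl(2) unfolding is_eigenvalue_def ga matw_UT by blast
    have "l = w*a0 \<or> l = w*a1 \<or> l = w*a2" using eig_UT[OF v(2) v(1)] .
    then have "\<not> (cmod a0 = 1 \<and> cmod a1 = 1 \<and> cmod a2 = 1)"
      using wl(3) wn by (auto simp: norm_mult)
    then show False using main_alg[OF sg disc V1 H1 ab nc _ pr] gG ga by blast
  qed
qed

end
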